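(* Let $K=\{p\in\mathbb{R}^3:0\le p_3\le\theta(p_1,p_2)\}$, let $p\in\mathbb{R}^3$ and suppose its Euclidean projection onto $K$ is of the form $p^{pr}=(p^{pr}_1,p^{pr}_2,\theta(p^{pr}_1,p^{pr}_2))$ with $(p^{pr}_1,p^{pr}_2)\in(0,\infty)^2$. For $q>0$ let $w(q)=(q^{1/2},q^{-1/2},\theta(q^{1/2},q^{-1/2}))$ and $n(q)=(-\partial_1\theta(q^{1/2},q^{-1/2}),-\partial_2\theta(q^{1/2},q^{-1/2}),1)$. Then there is a unique $(q,\tau)\in(0,\infty)^2$ with $p^{pr}=\tau\,w(q)$; this $q$ is the unique root of $q\mapsto\langle p,w(q)\times n(q)\rangle$ and $\tau=\langle p,w(q)/\|w(q)\|^2\rangle$.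
   Context: $\theta:[0,\infty)^2\to[0,\infty)$ is continuous, concave, 1-homogeneous, symmetric, $C^\infty$ on $(0,\infty)^2$, with $\theta(0,s)=\theta(s,0)=0$, $\theta(s,s)=s$, $\theta(s,t)>0$ for $s,t>0$, and nondecreasing in each argument; $\theta(s,t)=-\infty$ if $\min\{s,t\}<0$. $\times$ denotes the cross product in $\mathbb{R}^3$ and $\langle\cdot,\cdot\rangle$, $\|\cdot\|$ the Euclidean inner product and norm. *)

theory Defs
  imports "HOL-Analysis.Analysis"
begin

definition pd1 :: "(real \<Rightarrow> real \<Rightarrow> real) \<Rightarrow> real \<Rightarrow> real \<Rightarrow> real" where
  "pd1 f x y = deriv (\<lambda>s. f s y) x"

definition pd2 :: "(real \<Rightarrow> real \<Rightarrow> real) \<Rightarrow> real \<Rightarrow> real \<Rightarrow> real" where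
  "pd2 f x y = deriv (\<lambda>t. f x t) y"

(* iterated partial derivative: True = d/dx, False = d/dy, applied right-to-left *)
fun ipd :: "bool list \<Rightarrow> (real \<Rightarrow> real \<Rightarrow> real) \<Rightarrow> real \<Rightarrow> real \<Rightarrow> real" where
  "ipd [] f = f"
| "ipd (d # ds) f = (if d then pd1 (ipd ds f) else pd2 (ipd ds f))"

definition C_inf_on :: "(real \<times> real) set \<Rightarrow> (real \<Rightarrow> real \<Rightarrow> real) \<Rightarrow> bool" where
  "C_inf_on S f \<longleftrightarrow>
     (\<forall>ds. continuous_on S (\<lambda>(x, y). ipd ds f x y) \<and>
           (\<forall>(x, y)\<in>S. (\<lambda>s. ipd ds f s y) differentiable (at x) \<and>
                        (\<lambda>t. ipd ds f x t) differentiable (at y)))"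

definition admissible_theta :: "(real \<Rightarrow> real \<Rightarrow> real) \<Rightarrow> bool" where
  "admissible_theta \<theta> \<longleftrightarrow>
     continuous_on ({0..} \<times> {0..}) (\<lambda>(s, t). \<theta> s t) \<and>
     concave_on ({0..} \<times> {0..}) (\<lambda>(s, t). \<theta> s t) \<and>
     (\<forall>l s t. l \<ge> 0 \<and> s \<ge> 0 \<and> t \<ge> 0 \<longrightarrow> \<theta> (l * s) (l * t) = l * \<theta> s t) \<and>
     (\<forall>s t. s \<ge> 0 \<and> t \<ge> 0 \<longrightarrow> \<theta> s t = \<theta> t s) \<and>
     C_inf_on ({0<..} \<times> {0<..}) \<theta> \<and>
     (\<forall>s. s \<ge> 0 \<longrightarrow> \<theta> 0 s = 0 \<and> \<theta> s 0 = 0) \<and>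
     (\<forall>s. s \<ge> 0 \<longrightarrow> \<theta> s s = s) \<and>
     (\<forall>s t. s > 0 \<and> t > 0 \<longrightarrow> \<theta> s t > 0) \<and>
     (\<forall>s s' t. 0 \<le> s \<and> s \<le> s' \<and> 0 \<le> t \<longrightarrow> \<theta> s t \<le> \<theta> s' t) \<and>
     (\<forall>s t t'. 0 \<le> s \<and> 0 \<le> t \<and> t \<le> t' \<longrightarrow> \<theta> s t \<le> \<theta> s t')"

(* K = {p : 0 \<le> p3 \<le> \<theta>(p1,p2)}, with \<theta> = -\<infinity> outside the quadrant *)
definition Kset :: "(real \<Rightarrow> real \<Rightarrow> real) \<Rightarrow> (real^3) set" where
  "Kset \<theta> = {p. p$1 \<ge> 0 \<and> p$2 \<ge> 0 \<and> 0 \<le> p$3 \<and> p$3 \<le> \<theta> (p$1) (p$2)}"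

definition wvec :: "(real \<Rightarrow> real \<Rightarrow> real) \<Rightarrow> real \<Rightarrow> real^3" where
  "wvec \<theta> q = vector [sqrt q, 1 / sqrt q, \<theta> (sqrt q) (1 / sqrt q)]"

definition nvec :: "(real \<Rightarrow> real \<Rightarrow> real) \<Rightarrow> real \<Rightarrow> real^3" where
  "nvec \<theta> q = vector [- pd1 \<theta> (sqrt q) (1 / sqrt q), - pd2 \<theta> (sqrt q) (1 / sqrt q), 1]"

end

theory Submission
  imports Defs
begin


lemma core_sign:
  fixes \<rho> \<sigma> A B A' B' t l :: real
  assumes r: "0 < \<rho>" and s: "0 < \<sigma>" and ne: "\<rho> \<noteq> \<sigma>"
    and A: "A \<ge> 0" and B: "B \<ge> 0" and A': "A' \<ge> 0" and B': "B' \<ge> 0"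
    and i: "\<sigma>*A' + B' \<le> \<sigma>*A + B"
    and ii: "\<rho>*A + B \<le> \<rho>*A' + B'"
    and mono: "\<rho> < \<sigma> \<Longrightarrow> \<rho>*A + B \<le> \<sigma>*A' + B'"
    and chord: "\<sigma> < \<rho> \<Longrightarrow> \<sigma>*(\<rho>*A + B) \<le> \<rho>*(\<sigma>*A' + B')"
    and t: "t > 0" and l: "l \<ge> 0"
  shows "(t*\<sigma> - l*A') * (1 + B*(\<rho>*A+B)) - (t - l*B') * (\<rho> + A*(\<rho>*A+B))
         + (t*(\<sigma>*A'+B') + l) * (A - \<rho>*B) \<noteq> 0"
proof -
  define d where "d = \<sigma>*A + B - (\<sigma>*A'+B')"
  define G1 where "G1 = (1+A^2+B^2)*(\<sigma>-\<rho>) - d*(A-\<rho>*B)"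
  define G2 where "G2 = (A-A') + (B'-B)*\<rho> + (\<rho>*A+B)*(A*B'-A'*B)"
  have eq: "(t*\<sigma> - l*A') * (1 + B*(\<rho>*A+B)) - (t - l*B') * (\<rho> + A*(\<rho>*A+B))
         + (t*(\<sigma>*A'+B') + l) * (A - \<rho>*B) = t*G1 + l*G2"
    unfolding G1_def G2_def d_def by (simp add: algebra_simps power2_eq_square)
  have d0: "d \<ge> 0" using i by (simp add: d_def)
  have key: "(\<sigma> - \<rho>) * (A - A') \<ge> 0" using i ii by (simp add: algebra_simps)
  show ?thesis
  proof (cases "\<rho> < \<sigma>")
    case True
    have dA: "d \<le> A*(\<sigma>-\<rho>)" using mono[OF True] by (simp add: d_def algebra_simps)
    have "d*(A-\<rho>*B) \<le> (\<sigma>-\<rho>)*A^2"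
    proof (cases "A - \<rho>*B \<le> 0")
      case True then have "d*(A-\<rho>*B) \<le> 0" using d0 by (simp add: mult_nonneg_nonpos)
      moreover have "(\<sigma>-\<rho>)*A^2 \<ge> 0" using \<open>\<rho><\<sigma>\<close> by simp
      ultimately show ?thesis by linarith
    next
      case False
      then have "d*(A-\<rho>*B) \<le> A*(\<sigma>-\<rho>)*(A-\<rho>*B)" using dA by (intro mult_right_mono) auto
      also have "\<dots> = (\<sigma>-\<rho>)*A^2 - (\<sigma>-\<rho>)*(\<rho>*A*B)" by (simp add: algebra_simps power2_eq_square)
      also have "\<dots> \<le> (\<sigma>-\<rho>)*A^2" using \<open>\<rho><\<sigma>\<close> r A B by simp
      finally show ?thesis .
    qed
    moreover have "(\<sigma>-\<rho>)*A^2 < (1+A^2+B^2)*(\<sigma>-\<rho>)"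
    proof -
      have "1+B^2 > 0" using zero_le_power2[of B] by linarith
      hence "(1+B^2)*(\<sigma>-\<rho>) > 0" using \<open>\<rho><\<sigma>\<close> by (intro mult_pos_pos) auto
      then show ?thesis by (simp add: algebra_simps)
    qed
    ultimately have g1: "G1 > 0" unfolding G1_def by linarith
    have AA: "A - A' \<ge> 0" using key True
      by (metis diff_gt_0_iff_gt zero_le_mult_iff linorder_not_le)
    have BB: "B' - B \<ge> \<rho>*(A-A')" using ii by (simp add: algebra_simps)
    moreover have "\<rho>*(A-A') \<ge> 0" using AA r by simp
    ultimately have BB0: "B' - B \<ge> 0" by linarith
    have "A*B'-A'*B = A*(B'-B) + B*(A-A')" by (simp add: algebra_simps)
    hence "A*B'-A'*B \<ge> 0" using AA BB0 A B by simp
    hence g2: "G2 \<ge> 0" unfolding G2_def using AA BB0 r A B by simp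
    have "t*G1 + l*G2 > 0" using g1 g2 t l by (simp add: add_pos_nonneg)
    then show ?thesis using eq by simp
  next
    case False
    hence sr: "\<sigma> < \<rho>" using ne by simp
    have dB: "\<rho>*d \<le> (\<rho>-\<sigma>)*B" using chord[OF sr] by (simp add: d_def algebra_simps)
    have "d*(\<rho>*B-A) \<le> (\<rho>-\<sigma>)*B^2"
    proof (cases "\<rho>*B - A \<le> 0")
      case True then have "d*(\<rho>*B-A) \<le> 0" using d0 by (simp add: mult_nonneg_nonpos)
      moreover have "(\<rho>-\<sigma>)*B^2 \<ge> 0" using sr by simp
      ultimately show ?thesis by linarith
    next
      case False
      then have "\<rho>*d*(\<rho>*B-A) \<le> (\<rho>-\<sigma>)*B*(\<rho>*B-A)" using dB by (intro mult_right_mono) auto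
      also have "\<dots> = \<rho>*((\<rho>-\<sigma>)*B^2) - (\<rho>-\<sigma>)*B*A" by (simp add: algebra_simps power2_eq_square)
      also have "\<dots> \<le> \<rho>*((\<rho>-\<sigma>)*B^2)" using sr A B by simp
      finally have "\<rho>*(d*(\<rho>*B-A)) \<le> \<rho>*((\<rho>-\<sigma>)*B^2)" by (simp add: algebra_simps)
      then show ?thesis using r by simp
    qed
    moreover have "(\<rho>-\<sigma>)*B^2 < (1+A^2+B^2)*(\<rho>-\<sigma>)"
    proof -
      have "1+A^2 > 0" using zero_le_power2[of A] by linarith
      hence "(1+A^2)*(\<rho>-\<sigma>) > 0" using sr by (intro mult_pos_pos) auto
      then show ?thesis by (simp add: algebra_simps)
    qed
    ultimately have g1: "G1 < 0" unfolding G1_def by (simp add: algebra_simps)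
    have AA: "A' - A \<ge> 0" using key sr by (simp add: zero_le_mult_iff)
    have BB: "B' - B \<le> \<sigma>*(A-A')" using i by (simp add: algebra_simps)
    moreover have "\<sigma>*(A'-A) \<ge> 0" using AA s by simp
    ultimately have BB0: "B - B' \<ge> 0" by (simp add: algebra_simps)
    have "A'*B - A*B' = A*(B-B') + B*(A'-A)" by (simp add: algebra_simps)
    hence "A'*B - A*B' \<ge> 0" using AA BB0 A B by simp
    hence "(\<rho>*A+B)*(A*B'-A'*B) \<le> 0" using r A B by (simp add: mult_nonneg_nonpos)
    moreover have "(B'-B)*\<rho> \<le> 0" using BB0 r by (simp add: mult_nonpos_nonneg)
    ultimately have g2: "G2 \<le> 0" unfolding G2_def using AA by linarith
    have "t*G1 < 0" using g1 t by (simp add: mult_pos_neg)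
    moreover have "l*G2 \<le> 0" using g2 l by (simp add: mult_nonneg_nonpos)
    ultimately have "t*G1 + l*G2 < 0" by linarith
    then show ?thesis using eq by simp
  qed
qed



lemma adm_hom: "admissible_theta \<theta> \<Longrightarrow> l \<ge> 0 \<Longrightarrow> s \<ge> 0 \<Longrightarrow> t \<ge> 0 \<Longrightarrow> \<theta> (l * s) (l * t) = l * \<theta> s t"
proof -
  assume a: "admissible_theta \<theta>" and h: "l \<ge> 0" "s \<ge> 0" "t \<ge> 0"
  have "\<forall>l s t. l \<ge> 0 \<and> s \<ge> 0 \<and> t \<ge> 0 \<longrightarrow> \<theta> (l * s) (l * t) = l * \<theta> s t"
    by (insert a) (unfold admissible_theta_def, elim conjE, assumption)
  then show ?thesis using h by simp
qed
lemma adm_zero: "admissible_theta \<theta> \<Longrightarrow> s \<ge> 0 \<Longrightarrow> \<theta> 0 s = 0 \<and> \<theta> s 0 = 0"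
proof -
  assume a: "admissible_theta \<theta>" and h: "s \<ge> 0"
  have "\<forall>s. s \<ge> 0 \<longrightarrow> \<theta> 0 s = 0 \<and> \<theta> s 0 = 0"
    by (insert a) (unfold admissible_theta_def, elim conjE, assumption)
  then show ?thesis using h by simp
qed
lemma adm_pos: "admissible_theta \<theta> \<Longrightarrow> s > 0 \<Longrightarrow> t > 0 \<Longrightarrow> \<theta> s t > 0"
proof -
  assume a: "admissible_theta \<theta>" and h: "s > 0" "t > 0"
  have "\<forall>s t. s > 0 \<and> t > 0 \<longrightarrow> \<theta> s t > 0"
    by (insert a) (unfold admissible_theta_def, elim conjE, assumption)
  then show ?thesis using h by simp
qed
lemma adm_mono1: "admissible_theta \<theta> \<Longrightarrow> 0 \<le> s \<Longrightarrow> s \<le> s' \<Longrightarrow> 0 \<le> t \<Longrightarrow> \<theta> s t \<le> \<theta> s' t"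
proof -
  assume a: "admissible_theta \<theta>" and h: "0 \<le> s" "s \<le> s'" "0 \<le> t"
  have "\<forall>s s' t. 0 \<le> s \<and> s \<le> s' \<and> 0 \<le> t \<longrightarrow> \<theta> s t \<le> \<theta> s' t"
    by (insert a) (unfold admissible_theta_def, elim conjE, assumption)
  then show ?thesis using h by simp
qed
lemma adm_mono2: "admissible_theta \<theta> \<Longrightarrow> 0 \<le> s \<Longrightarrow> 0 \<le> t \<Longrightarrow> t \<le> t' \<Longrightarrow> \<theta> s t \<le> \<theta> s t'"
proof -
  assume a: "admissible_theta \<theta>" and h: "0 \<le> s" "0 \<le> t" "t \<le> t'"
  have "\<forall>s t t'. 0 \<le> s \<and> 0 \<le> t \<and> t \<le> t' \<longrightarrow> \<theta> s t \<le> \<theta> s t'"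
    by (insert a) (unfold admissible_theta_def, elim conjE, assumption)
  then show ?thesis using h by simp
qed
lemma adm_cont: "admissible_theta \<theta> \<Longrightarrow> continuous_on ({0..} \<times> {0..}) (\<lambda>(s, t). \<theta> s t)"
  by (unfold admissible_theta_def, elim conjE, assumption)
lemma adm_conc: "admissible_theta \<theta> \<Longrightarrow> concave_on ({0..} \<times> {0..}) (\<lambda>(s, t). \<theta> s t)"
  by (unfold admissible_theta_def, elim conjE, assumption)
lemma adm_Cinf: "admissible_theta \<theta> \<Longrightarrow> C_inf_on ({0<..} \<times> {0<..}) \<theta>"
  by (unfold admissible_theta_def, elim conjE, assumption)

lemma adm_nonneg: "admissible_theta \<theta> \<Longrightarrow> s \<ge> 0 \<Longrightarrow> t \<ge> 0 \<Longrightarrow> \<theta> s t \<ge> 0"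
  using adm_mono1[of \<theta> 0 s t] adm_zero[of \<theta> t] by simp

lemma adm_hom2: "admissible_theta \<theta> \<Longrightarrow> x > 0 \<Longrightarrow> y > 0 \<Longrightarrow> \<theta> x y = y * \<theta> (x/y) 1"
  using adm_hom[of \<theta> y "x/y" 1] by simp

lemma d1: assumes "admissible_theta \<theta>" "x > 0" "y > 0"
  shows "((\<lambda>s. \<theta> s y) has_real_derivative pd1 \<theta> x y) (at x)"
proof -
  have "(\<lambda>s. ipd [] \<theta> s y) differentiable (at x)"
  proof -
    have "\<forall>(x, y)\<in>{0<..} \<times> {0<..}. (\<lambda>s. ipd [] \<theta> s y) differentiable (at x) \<and> (\<lambda>t. ipd [] \<theta> x t) differentiable (at y)"
      using adm_Cinf[OF assms(1)] unfolding C_inf_on_def by (erule_tac x="[]" in allE) (erule conjE, assumption)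
    then show ?thesis using assms(2,3) by auto
  qed
  then show ?thesis unfolding pd1_def by (simp add: DERIV_deriv_iff_real_differentiable)
qed

lemma d2: assumes "admissible_theta \<theta>" "x > 0" "y > 0"
  shows "((\<lambda>t. \<theta> x t) has_real_derivative pd2 \<theta> x y) (at y)"
proof -
  have "(\<lambda>t. ipd [] \<theta> x t) differentiable (at y)"
  proof -
    have "\<forall>(x, y)\<in>{0<..} \<times> {0<..}. (\<lambda>s. ipd [] \<theta> s y) differentiable (at x) \<and> (\<lambda>t. ipd [] \<theta> x t) differentiable (at y)"
      using adm_Cinf[OF assms(1)] unfolding C_inf_on_def by (erule_tac x="[]" in allE) (erule conjE, assumption)
    then show ?thesis using assms(2,3) by auto
  qed
  then show ?thesis unfolding pd2_def by (simp add: DERIV_deriv_iff_real_differentiable)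
qed

lemma pd1_hom: assumes a: "admissible_theta \<theta>" and x: "x > 0" and y: "y > 0"
  shows "pd1 \<theta> x y = pd1 \<theta> (x/y) 1"
proof -
  have "((\<lambda>s. \<theta> (s/y) 1) has_real_derivative pd1 \<theta> (x/y) 1 * (1/y)) (at x)"
    by (rule DERIV_chain2[OF d1[OF a]]) (use x y in \<open>auto intro!: derivative_eq_intros\<close>)
  then have "((\<lambda>s. y * \<theta> (s/y) 1) has_real_derivative y * (pd1 \<theta> (x/y) 1 * (1/y))) (at x)"
    by (rule DERIV_cmult)
  then have "((\<lambda>s. y * \<theta> (s/y) 1) has_real_derivative pd1 \<theta> (x/y) 1) (at x)"
    using y by simp
  then have "((\<lambda>s. \<theta> s y) has_real_derivative pd1 \<theta> (x/y) 1) (at x)"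
    by (rule has_field_derivative_transform_within_open[where S="{0<..}"])
       (use x y adm_hom2[OF a _ y] in auto)
  then show ?thesis using DERIV_unique d1[OF a x y] by blast
qed

lemma pd2_hom: assumes a: "admissible_theta \<theta>" and x: "x > 0" and y: "y > 0"
  shows "pd2 \<theta> x y = \<theta> (x/y) 1 - (x/y) * pd1 \<theta> (x/y) 1"
proof -
  have "((\<lambda>t. \<theta> (x/t) 1) has_real_derivative pd1 \<theta> (x/y) 1 * (-(x/y^2))) (at y)"
    by (rule DERIV_chain2[OF d1[OF a]]) (use x y in \<open>auto intro!: derivative_eq_intros simp: power2_eq_square\<close>)
  then have "((\<lambda>t. t * \<theta> (x/t) 1) has_real_derivative 1 * \<theta> (x/y) 1 + (pd1 \<theta> (x/y) 1 * (-(x/y^2))) * y) (at y)"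
    by (rule DERIV_mult[OF DERIV_ident])
  then have "((\<lambda>t. t * \<theta> (x/t) 1) has_real_derivative \<theta> (x/y) 1 - (x/y) * pd1 \<theta> (x/y) 1) (at y)"
    using y by (simp add: power2_eq_square field_simps)
  then have "((\<lambda>t. \<theta> x t) has_real_derivative \<theta> (x/y) 1 - (x/y) * pd1 \<theta> (x/y) 1) (at y)"
    by (rule has_field_derivative_transform_within_open[where S="{0<..}"])
       (use x y adm_hom2[OF a x] in auto)
  then show ?thesis using DERIV_unique d2[OF a x y] by blast
qed

lemma phi_concave: assumes a: "admissible_theta \<theta>"
  shows "convex_on {0..} (\<lambda>s. - \<theta> s 1)"
proof -
  have c: "concave_on ({0..} \<times> {0..}) (\<lambda>(s, t). \<theta> s t)" by (rule adm_conc[OF a])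
  show ?thesis unfolding convex_on_def
  proof (intro conjI ballI allI impI)
    fix x y u v :: real assume xy: "x \<in> {0..}" "y \<in> {0..}" and uv: "u \<ge> 0" "v \<ge> 0" "u + v = 1"
    have "(\<lambda>(s, t). \<theta> s t) (u *\<^sub>R (x,1) + v *\<^sub>R (y,1)) \<ge> u * (\<lambda>(s, t). \<theta> s t) (x,1) + v * (\<lambda>(s, t). \<theta> s t) (y,1)"
    proof -
      have m: "(x,1) \<in> {0::real..} \<times> {0::real..}" "(y,1) \<in> {0::real..} \<times> {0::real..}" using xy by auto
      show ?thesis using c[unfolded concave_on_iff] m uv by blast
    qed
    then show "- \<theta> (u *\<^sub>R x + v *\<^sub>R y) 1 \<le> u * - \<theta> x 1 + v * - \<theta> y 1"
      using uv by (simp add: algebra_simps)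
  qed (simp add: convex_real_interval)
qed

lemma supg: assumes a: "admissible_theta \<theta>" and x: "x > 0" and s: "s \<ge> 0"
  shows "\<theta> s 1 \<le> \<theta> x 1 + pd1 \<theta> x 1 * (s - x)"
proof -
  have der: "((\<lambda>s. - \<theta> s 1) has_real_derivative - pd1 \<theta> x 1) (at x within {0..})"
    by (rule has_field_derivative_at_within, rule DERIV_minus, rule d1[OF a x], simp)
  have conn: "connected {0::real..}" by (simp add: convex_connected convex_real_interval)
  have int: "x \<in> interior {0..}" using x by simp
  have sin: "s \<in> {0..}" using s by simp
  have "- \<theta> s 1 - - \<theta> x 1 \<ge> - pd1 \<theta> x 1 * (s - x)"
    by (rule convex_on_imp_above_tangent[OF phi_concave[OF a] conn int sin der])
  then show ?thesis by (simp add: algebra_simps)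
qed

lemma Apos: assumes a: "admissible_theta \<theta>" and x: "x > 0" shows "pd1 \<theta> x 1 \<ge> 0"
  using supg[OF a x, of "x+1"] adm_mono1[OF a, of x "x+1" 1] x by simp

lemma Bpos: assumes a: "admissible_theta \<theta>" and x: "x > 0" shows "\<theta> x 1 - x * pd1 \<theta> x 1 \<ge> 0"
  using supg[OF a x, of 0] adm_zero[OF a, of 1] x by (simp add: algebra_simps)

lemma chord: assumes a: "admissible_theta \<theta>" and s: "0 < \<sigma>" "\<sigma> < \<rho>"
  shows "\<sigma> * \<theta> \<rho> 1 \<le> \<rho> * \<theta> \<sigma> 1"
proof -
  have "\<theta> ((\<sigma>/\<rho>)*\<rho>) ((\<sigma>/\<rho>)*1) = (\<sigma>/\<rho>) * \<theta> \<rho> 1" using adm_hom[OF a, of "\<sigma>/\<rho>" \<rho> 1] s by simp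
  moreover have "\<theta> ((\<sigma>/\<rho>)*\<rho>) ((\<sigma>/\<rho>)*1) \<le> \<theta> \<sigma> 1"
    using adm_mono2[OF a, of \<sigma> "\<sigma>/\<rho>" 1] s by simp
  ultimately have "(\<sigma>/\<rho>) * \<theta> \<rho> 1 \<le> \<theta> \<sigma> 1" by simp
  then show ?thesis using s by (simp add: field_simps)
qed

lemma wvec_eq: assumes a: "admissible_theta \<theta>" and r: "r > 0"
  shows "wvec \<theta> r = (1 / sqrt r) *\<^sub>R vector [r, 1, \<theta> r 1]"
proof -
  have "\<theta> (sqrt r) (1 / sqrt r) = \<theta> ((1/sqrt r) * r) ((1/sqrt r)*1)"
    using r by (simp add: field_simps real_sqrt_divide) (metis real_div_sqrt less_imp_le)
  also have "\<dots> = (1/sqrt r) * \<theta> r 1" using adm_hom[OF a, of "1/sqrt r" r 1] r by simp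
  finally show ?thesis unfolding wvec_def using r
    by (simp add: vec_eq_iff forall_3 real_div_sqrt)
qed

lemma nvec_eq: assumes a: "admissible_theta \<theta>" and r: "r > 0"
  shows "nvec \<theta> r = vector [- pd1 \<theta> r 1, - (\<theta> r 1 - r * pd1 \<theta> r 1), 1]"
proof -
  have q: "sqrt r / (1 / sqrt r) = r" using r by simp
  show ?thesis unfolding nvec_def
    using pd1_hom[OF a, of "sqrt r" "1/sqrt r"] pd2_hom[OF a, of "sqrt r" "1/sqrt r"] r q
    by (simp add: vec_eq_iff forall_3)
qed



lemma Kclosed: assumes a: "admissible_theta \<theta>" shows "closed (Kset \<theta>)"
proof -
  let ?g = "\<lambda>v::real^3. (max (v$1) 0, max (v$2) 0)"
  let ?f = "\<lambda>v::real^3. \<theta> (max (v$1) 0) (max (v$2) 0)"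
  have cg: "continuous_on UNIV ?g" by (intro continuous_intros)
  have im: "?g ` UNIV \<subseteq> {0..} \<times> {0..}" by auto
  have "continuous_on UNIV (\<lambda>v. (\<lambda>(s, t). \<theta> s t) (?g v))"
    by (rule continuous_on_compose2[OF adm_cont[OF a] cg im])
  then have cf: "continuous_on UNIV ?f" by simp
  have eq: "Kset \<theta> = {v. 0 \<le> v$1} \<inter> {v. 0 \<le> v$2} \<inter> {v. 0 \<le> v$3} \<inter> {v. v$3 \<le> ?f v}"
    unfolding Kset_def by (auto simp: max_absorb1)
  have c1: "\<And>i. continuous_on UNIV (\<lambda>v::real^3. v$i)" by (intro continuous_intros)
  show ?thesis unfolding eq
    by (intro closed_Int closed_Collect_le c1 cf continuous_on_const)
qed

lemma dist3: "(dist (p::real^3) v)^2 = (p$1-v$1)^2 + (p$2-v$2)^2 + (p$3-v$3)^2"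
  by (simp only: dist_norm power2_norm_eq_inner) (simp add: inner_vec_def sum_3 power2_eq_square)



lemma ex_lemma: "(vector [P1,P2,P3] :: real^3) \<bullet> cross3 (vector [r,1,c]) (vector [-a,-b,1])
   = P1*(1 + b*c) - P2*(r + a*c) + P3*(a - r*b)"
  by (simp add: cross3_def inner_vec_def sum_3 algebra_simps)

theorem lemma4p5:
  fixes \<theta> :: "real \<Rightarrow> real \<Rightarrow> real" and p pp :: "real^3"
  assumes "admissible_theta \<theta>"
    and "pp = closest_point (Kset \<theta>) p"
    and "pp$1 > 0" and "pp$2 > 0"
    and "pp$3 = \<theta> (pp$1) (pp$2)"
  shows "(\<exists>!(q, \<tau>). q > 0 \<and> \<tau> > 0 \<and> pp = \<tau> *\<^sub>R wvec \<theta> q) \<and>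
         (\<forall>q \<tau>. q > 0 \<and> \<tau> > 0 \<and> pp = \<tau> *\<^sub>R wvec \<theta> q \<longrightarrow>
            p \<bullet> cross3 (wvec \<theta> q) (nvec \<theta> q) = 0 \<and>
            (\<forall>r>0. p \<bullet> cross3 (wvec \<theta> r) (nvec \<theta> r) = 0 \<longrightarrow> r = q) \<and>
            \<tau> = p \<bullet> ((1 / (norm (wvec \<theta> q))\<^sup>2) *\<^sub>R wvec \<theta> q))"
proof -
  note a = assms(1)
  define x0 where "x0 = pp$1"
  define y0 where "y0 = pp$2"
  define z0 where "z0 = pp$3"
  have x0: "x0 > 0" and y0: "y0 > 0" and z0: "z0 = \<theta> x0 y0"
    using assms(3-5) by (simp_all add: x0_def y0_def z0_def)
  have cl: "closed (Kset \<theta>)" by (rule Kclosed[OF a])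
  have ne: "Kset \<theta> \<noteq> {}"
  proof -
    have "(0::real^3) \<in> Kset \<theta>" unfolding Kset_def using adm_zero[OF a, of 0] by simp
    then show ?thesis by blast
  qed
  have min: "\<And>v. v \<in> Kset \<theta> \<Longrightarrow> dist p pp \<le> dist p v"
    using closest_point_exists(2)[OF cl ne, of p] assms(2) by auto
  have min2: "(p$1-x0)^2 + (p$2-y0)^2 + (p$3-z0)^2 \<le> (p$1-v$1)^2 + (p$2-v$2)^2 + (p$3-v$3)^2"
    if "v \<in> Kset \<theta>" for v
  proof -
    have "(dist p pp)^2 \<le> (dist p v)^2" using min[OF that] by (simp add: power_mono)
    then show ?thesis unfolding dist3 x0_def y0_def z0_def .
  qed
  define a0 where "a0 = pd1 \<theta> x0 y0"
  define b0 where "b0 = pd2 \<theta> x0 y0"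
  define l where "l = p$3 - z0"
  have fx: "p$1 = x0 - l * a0"
  proof -
    let ?H = "\<lambda>s. (p$1 - s)^2 + (p$3 - \<theta> s y0)^2"
    have D: "(?H has_real_derivative (2*(p$1-x0)*(-1) + 2*(p$3 - \<theta> x0 y0)*(-a0))) (at x0)"
      unfolding a0_def
      by (rule derivative_eq_intros d1[OF a x0 y0] refl | simp)+
    have "\<forall>s. \<bar>x0 - s\<bar> < x0 \<longrightarrow> ?H x0 \<le> ?H s"
    proof (intro allI impI)
      fix s assume "\<bar>x0 - s\<bar> < x0"
      then have s: "s > 0" by linarith
      have "vector [s, y0, \<theta> s y0] \<in> Kset \<theta>"
        unfolding Kset_def using s y0 adm_nonneg[OF a, of s y0] by simp
      from min2[OF this] show "?H x0 \<le> ?H s" using z0 by simp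
    qed
    from DERIV_local_min[OF D x0 this] show ?thesis using z0 by (simp add: l_def algebra_simps)
  qed
  have fy: "p$2 = y0 - l * b0"
  proof -
    let ?H = "\<lambda>t. (p$2 - t)^2 + (p$3 - \<theta> x0 t)^2"
    have D: "(?H has_real_derivative (2*(p$2-y0)*(-1) + 2*(p$3 - \<theta> x0 y0)*(-b0))) (at y0)"
      unfolding b0_def
      by (rule derivative_eq_intros d2[OF a x0 y0] refl | simp)+
    have "\<forall>t. \<bar>y0 - t\<bar> < y0 \<longrightarrow> ?H y0 \<le> ?H t"
    proof (intro allI impI)
      fix t assume "\<bar>y0 - t\<bar> < y0"
      then have t: "t > 0" by linarith
      have "vector [x0, t, \<theta> x0 t] \<in> Kset \<theta>"
        unfolding Kset_def using t x0 adm_nonneg[OF a, of x0 t] by simp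
      from min2[OF this] show "?H y0 \<le> ?H t" using z0 by simp
    qed
    from DERIV_local_min[OF D y0 this] show ?thesis using z0 by (simp add: l_def algebra_simps)
  qed
  have l0: "l \<ge> 0"
  proof (rule ccontr)
    assume "\<not> l \<ge> 0"
    then have ln: "l < 0" by simp
    have zp: "z0 > 0" using z0 adm_pos[OF a x0 y0] by simp
    define e where "e = min z0 (-l)"
    have e: "0 < e" "e \<le> z0" "e \<le> -l" using zp ln by (auto simp: e_def)
    have "vector [x0, y0, z0 - e] \<in> Kset \<theta>"
      unfolding Kset_def using x0 y0 e z0 by simp
    from min2[OF this] have "(p$3-z0)^2 \<le> (p$3-(z0-e))^2" by simp
    then have "l^2 \<le> (l+e)^2" by (simp add: l_def algebra_simps)
    then have "0 \<le> e*(2*l+e)" by (simp add: power2_eq_square algebra_simps)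
    moreover have "e*(2*l+e) < 0" using e ln by (intro mult_pos_neg) auto
    ultimately show False by simp
  qed
  define q where "q = x0 / y0"
  have q: "q > 0" using x0 y0 by (simp add: q_def)
  have x0q: "x0 = y0 * q" using y0 by (simp add: q_def)
  define t0 where "t0 = y0 * sqrt q"
  have t0: "t0 > 0" using y0 q by (simp add: t0_def)
  define A where "A = pd1 \<theta> q 1"
  define B where "B = \<theta> q 1 - q * A"
  have a0A: "a0 = A" unfolding a0_def A_def q_def by (rule pd1_hom[OF a x0 y0])
  have b0B: "b0 = B" unfolding b0_def B_def A_def q_def by (rule pd2_hom[OF a x0 y0])
  have z0q: "z0 = y0 * \<theta> q 1" unfolding z0 q_def by (rule adm_hom2[OF a x0 y0])
  have ppeq: "pp = vector [y0 * q, y0, y0 * \<theta> q 1]"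
    using x0q z0q by (simp add: vec_eq_iff forall_3 x0_def y0_def z0_def)
  have peq: "p = vector [y0 * q - l * A, y0 - l * B, y0 * \<theta> q 1 + l]"
    using fx fy x0q z0q a0A b0B by (simp add: vec_eq_iff forall_3 l_def)
  have wq: "wvec \<theta> q = (1 / sqrt q) *\<^sub>R vector [q, 1, \<theta> q 1]" by (rule wvec_eq[OF a q])
  have nq: "nvec \<theta> q = vector [- A, - B, 1]" using nvec_eq[OF a q] by (simp add: A_def B_def)
  have rep: "pp = t0 *\<^sub>R wvec \<theta> q"
    unfolding wq ppeq t0_def using q by (simp add: vec_eq_iff forall_3)
  have uniq: "q' = q \<and> \<tau>' = t0" if h: "q' > 0" "\<tau>' > 0" "pp = \<tau>' *\<^sub>R wvec \<theta> q'" for q' \<tau>'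
  proof -
    have "pp = (\<tau>' / sqrt q') *\<^sub>R vector [q', 1, \<theta> q' 1]"
      using h(3) wvec_eq[OF a h(1)] by simp
    then have c1: "y0 * q = (\<tau>' / sqrt q') * q'" and c2: "y0 = \<tau>' / sqrt q'"
      using ppeq by (auto simp: vec_eq_iff forall_3)
    have "q' = q" using c1 c2 y0 h(1,2) by auto
    moreover have "\<tau>' = t0" using c2 h(1) \<open>q' = q\<close> by (simp add: t0_def)
    ultimately show ?thesis by simp
  qed
  have part1: "\<exists>!(q, \<tau>). q > 0 \<and> \<tau> > 0 \<and> pp = \<tau> *\<^sub>R wvec \<theta> q"
  proof (rule ex1I[of _ "(q, t0)"])
    show "case (q, t0) of (q, \<tau>) \<Rightarrow> q > 0 \<and> \<tau> > 0 \<and> pp = \<tau> *\<^sub>R wvec \<theta> q"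
      using q t0 rep by simp
  next
    fix y assume "case y of (q, \<tau>) \<Rightarrow> q > 0 \<and> \<tau> > 0 \<and> pp = \<tau> *\<^sub>R wvec \<theta> q"
    then show "y = (q, t0)" using uniq by (cases y) auto
  qed
  have pl: "p = t0 *\<^sub>R wvec \<theta> q + l *\<^sub>R nvec \<theta> q"
    unfolding rep[symmetric] ppeq nq peq by (simp add: vec_eq_iff forall_3 algebra_simps)
  have ort: "nvec \<theta> q \<bullet> wvec \<theta> q = 0"
    unfolding nq wq by (simp add: inner_vec_def sum_3 B_def algebra_simps add_divide_distrib[symmetric])
  have wne: "wvec \<theta> q \<noteq> 0"
  proof
    assume "wvec \<theta> q = 0"
    then have "(wvec \<theta> q)$2 = 0" by simp
    then show False using q unfolding wvec_def by simp
  qed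
  have root: "p \<bullet> cross3 (wvec \<theta> q) (nvec \<theta> q) = 0"
    unfolding pl by (simp add: inner_add_left dot_cross_self)
  have tau: "t0 = p \<bullet> ((1 / (norm (wvec \<theta> q))\<^sup>2) *\<^sub>R wvec \<theta> q)"
  proof -
    have "p \<bullet> wvec \<theta> q = t0 * (norm (wvec \<theta> q))\<^sup>2"
    proof -
      have "p \<bullet> wvec \<theta> q = t0 * (wvec \<theta> q \<bullet> wvec \<theta> q) + l * (nvec \<theta> q \<bullet> wvec \<theta> q)"
        unfolding pl by (simp add: inner_add_left)
      then show ?thesis using ort by (simp add: power2_norm_eq_inner)
    qed
    moreover have "(norm (wvec \<theta> q))\<^sup>2 \<noteq> 0" using wne by simp
    ultimately show ?thesis by simp
  qed
  have runiq: "r = q" if r: "r > 0" and h: "p \<bullet> cross3 (wvec \<theta> r) (nvec \<theta> r) = 0" for r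
  proof (rule ccontr)
    assume ne: "r \<noteq> q"
    define Ar where "Ar = pd1 \<theta> r 1"
    define Br where "Br = \<theta> r 1 - r * Ar"
    have nr: "nvec \<theta> r = vector [- Ar, - Br, 1]" using nvec_eq[OF a r] by (simp add: Ar_def Br_def)
    have "p \<bullet> cross3 (wvec \<theta> r) (nvec \<theta> r) = (1 / sqrt r) * (p \<bullet> cross3 (vector [r, 1, \<theta> r 1]) (nvec \<theta> r))"
      unfolding wvec_eq[OF a r] by (simp add: cross_mult_left)
    with h r have h2: "p \<bullet> cross3 (vector [r, 1, \<theta> r 1]) (nvec \<theta> r) = 0" by simp
    have thr: "\<theta> r 1 = r * Ar + Br" by (simp add: Br_def)
    have thq: "\<theta> q 1 = q * A + B" by (simp add: B_def)
    have ex: "p \<bullet> cross3 (vector [r, 1, \<theta> r 1]) (nvec \<theta> r) =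
      (y0*q - l*A) * (1 + Br*(r*Ar+Br)) - (y0 - l*B) * (r + Ar*(r*Ar+Br))
         + (y0*(q*A+B) + l) * (Ar - r*Br)"
      unfolding nr peq thr thq by (rule ex_lemma)
    have "(y0*q - l*A) * (1 + Br*(r*Ar+Br)) - (y0 - l*B) * (r + Ar*(r*Ar+Br))
         + (y0*(q*A+B) + l) * (Ar - r*Br) \<noteq> 0"
    proof (rule core_sign[OF r q ne])
      show "Ar \<ge> 0" unfolding Ar_def by (rule Apos[OF a r])
      show "Br \<ge> 0" unfolding Br_def Ar_def by (rule Bpos[OF a r])
      show "A \<ge> 0" unfolding A_def by (rule Apos[OF a q])
      show "B \<ge> 0" unfolding B_def A_def by (rule Bpos[OF a q])
      show "q*A + B \<le> q*Ar + Br"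
        using supg[OF a r, of q] q by (simp add: Ar_def Br_def B_def algebra_simps)
      show "r*Ar + Br \<le> r*A + B"
        using supg[OF a q, of r] r by (simp add: A_def Br_def B_def algebra_simps)
      show "r*Ar + Br \<le> q*A + B" if "r < q"
        using adm_mono1[OF a, of r q 1] that r by (simp add: Br_def B_def)
      show "q*(r*Ar + Br) \<le> r*(q*A + B)" if "q < r"
        using chord[OF a q that] by (simp add: Br_def B_def)
      show "y0 > 0" by (rule y0)
      show "l \<ge> 0" by (rule l0)
    qed
    with ex h2 show False by simp
  qed
  have part2: "\<forall>q' \<tau>'. q' > 0 \<and> \<tau>' > 0 \<and> pp = \<tau>' *\<^sub>R wvec \<theta> q' \<longrightarrow>
            p \<bullet> cross3 (wvec \<theta> q') (nvec \<theta> q') = 0 \<and>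
            (\<forall>r>0. p \<bullet> cross3 (wvec \<theta> r) (nvec \<theta> r) = 0 \<longrightarrow> r = q') \<and>
            \<tau>' = p \<bullet> ((1 / (norm (wvec \<theta> q'))\<^sup>2) *\<^sub>R wvec \<theta> q')"
  proof (intro allI impI)
    fix q' \<tau>' assume h: "q' > 0 \<and> \<tau>' > 0 \<and> pp = \<tau>' *\<^sub>R wvec \<theta> q'"
    then have e: "q' = q" "\<tau>' = t0" using uniq by blast+
    show "p \<bullet> cross3 (wvec \<theta> q') (nvec \<theta> q') = 0 \<and>
            (\<forall>r>0. p \<bullet> cross3 (wvec \<theta> r) (nvec \<theta> r) = 0 \<longrightarrow> r = q') \<and>
            \<tau>' = p \<bullet> ((1 / (norm (wvec \<theta> q'))\<^sup>2) *\<^sub>R wvec \<theta> q')"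
      unfolding e using root runiq tau by blast
  qed
  show ?thesis using part1 part2 by (rule conjI)
qed

end
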